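(* Let $\Gamma$ be a connected signed graph with $n$ vertices and $m$ edges, and let $\mu_1\ge\mu_2\ge\cdots\ge\mu_n\ge 0$ be the eigenvalues of its Laplacian matrix $L(\Gamma)$ (with multiplicity). Let $p$ be a positive integer. Then the spectrum of the adjacency matrix of $S_p(\Gamma)$, as a multiset, is: if $\Gamma$ is balanced (in which case $\mu_n=0$): $0$ with multiplicity $pm-n+2$, together with $\pm\sqrt{p\mu_i}$ for $i=1,\dots,n-1$; if $\Gamma$ is unbalanced: $0$ with multiplicity $pm-n$, together with $\pm\sqrt{p\mu_i}$ for $i=1,\dots,n$.
   Context: A signed graph $\Gamma=(G,\sigma)$ is a simple graph $G$ with a sign function $\sigma:E(G)\to\{1,-1\}$; its adjacency matrix $A(\Gamma)$ has $(i,j)$ entry $\sigma(v_iv_j)$ if $v_iv_j\in E(G)$ and $0$ otherwise, and its Laplacian matrix is $L(\Gamma)=D(G)-A(\Gamma)$ with $D(G)$ the diagonal degree matrix. $\Gamma$ is balanced if every cycle has an even number of negative edges, unbalanced otherwise. The spectrum of a signed graph means the spectrum of its adjacency matrix. Orientation: for $\Gamma$ with vertices $v_1,\dots,v_n$ and edges $e_1,\dots,e_m$, fix a function $\vartheta$ assigning to each pair $(v,e)$ with $v$ an end of $e$ a value $\vartheta(v,e)\in\{1,-1\}$, such that for every edge $e=vw$, $\vartheta(v,e)\vartheta(w,e)=-\sigma(e)$. The signed graph $S_p(\Gamma)$ ($p$ a positive integer): its vertex set is $V(G)\cup\{e_j^{(t)}:1\le j\le m,\ 1\le t\le p\}$;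 its edges are exactly the pairs $v\,e_j^{(t)}$ with $v$ an end of $e_j$ in $G$, with sign $\vartheta(v,e_j)$ (the edges of $G$ are not kept). It has $n+pm$ vertices and $2pm$ edges; $S_1(\Gamma)=S(\Gamma)$ is the signed subdivision graph. *)

theory Defs
  imports "Jordan_Normal_Form.Char_Poly" "HOL-Library.Multiset"
begin

text \<open>A signed graph on vertex set {0..<n}: edges e_0,...,e_{m-1} are given by the list E of
  endpoint pairs, and sigma j in {1,-1} is the sign of edge e_j.\<close>

definition ends :: "(nat \<times> nat) list \<Rightarrow> nat \<Rightarrow> nat set" where
  "ends E j = {fst (E ! j), snd (E ! j)}"

definition signed_graph :: "nat \<Rightarrow> (nat \<times> nat) list \<Rightarrow> (nat \<Rightarrow> int) \<Rightarrow> bool" where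
  "signed_graph n E \<sigma> \<longleftrightarrow>
     (\<forall>j < length E. fst (E ! j) < n \<and> snd (E ! j) < n \<and> fst (E ! j) \<noteq> snd (E ! j)
        \<and> (\<sigma> j = 1 \<or> \<sigma> j = -1))
     \<and> distinct (map (ends E) [0..<length E])"

definition adj :: "(nat \<times> nat) list \<Rightarrow> nat \<Rightarrow> nat \<Rightarrow> bool" where
  "adj E u v \<longleftrightarrow> (\<exists>j < length E. ends E j = {u, v})"

definition connected_graph :: "nat \<Rightarrow> (nat \<times> nat) list \<Rightarrow> bool" where
  "connected_graph n E \<longleftrightarrow> n \<ge> 1 \<and> (\<forall>u < n. \<forall>v < n. (adj E)\<^sup>*\<^sup>* u v)"

definition is_cycle :: "(nat \<times> nat) list \<Rightarrow> nat list \<Rightarrow> nat list \<Rightarrow> bool" where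
  "is_cycle E vs es \<longleftrightarrow> length vs \<ge> 3 \<and> length es = length vs \<and> distinct vs \<and> distinct es
     \<and> (\<forall>i < length vs. es ! i < length E
           \<and> ends E (es ! i) = {vs ! i, vs ! ((i + 1) mod length vs)})"

definition balanced :: "(nat \<times> nat) list \<Rightarrow> (nat \<Rightarrow> int) \<Rightarrow> bool" where
  "balanced E \<sigma> \<longleftrightarrow>
     (\<forall>vs es. is_cycle E vs es \<longrightarrow> even (length (filter (\<lambda>j. \<sigma> j = -1) es)))"

definition adjacency :: "nat \<Rightarrow> (nat \<times> nat) list \<Rightarrow> (nat \<Rightarrow> int) \<Rightarrow> real mat" where
  "adjacency n E \<sigma> = mat n n (\<lambda>(u, v).
     if \<exists>j < length E. ends E j = {u, v} \<and> u \<noteq> v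
     then of_int (\<sigma> (THE j. j < length E \<and> ends E j = {u, v})) else 0)"

definition degree :: "(nat \<times> nat) list \<Rightarrow> nat \<Rightarrow> nat" where
  "degree E v = card {j. j < length E \<and> v \<in> ends E j}"

definition laplacian :: "nat \<Rightarrow> (nat \<times> nat) list \<Rightarrow> (nat \<Rightarrow> int) \<Rightarrow> real mat" where
  "laplacian n E \<sigma> = mat n n (\<lambda>(u, v). if u = v then real (degree E u) else 0) - adjacency n E \<sigma>"

definition orientation :: "(nat \<times> nat) list \<Rightarrow> (nat \<Rightarrow> int) \<Rightarrow> (nat \<Rightarrow> nat \<Rightarrow> int) \<Rightarrow> bool" where
  "orientation E \<sigma> \<theta> \<longleftrightarrow>
     (\<forall>j < length E. (\<theta> (fst (E ! j)) j = 1 \<or> \<theta> (fst (E ! j)) j = -1)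
        \<and> (\<theta> (snd (E ! j)) j = 1 \<or> \<theta> (snd (E ! j)) j = -1)
        \<and> \<theta> (fst (E ! j)) j * \<theta> (snd (E ! j)) j = - \<sigma> j)"

text \<open>Adjacency matrix of S_p(Gamma): vertices 0..<n are the original vertices; vertex
  n + j*p + t (j < m, t < p) is e_j^(t+1).\<close>
definition Sp_entry :: "nat \<Rightarrow> nat \<Rightarrow> (nat \<times> nat) list \<Rightarrow> (nat \<Rightarrow> nat \<Rightarrow> int) \<Rightarrow> nat \<Rightarrow> nat \<Rightarrow> int" where
  "Sp_entry n p E \<theta> v x =
     (if v < n \<and> n \<le> x \<and> v \<in> ends E ((x - n) div p) then \<theta> v ((x - n) div p) else 0)"

definition Sp_adjacency :: "nat \<Rightarrow> nat \<Rightarrow> (nat \<times> nat) list \<Rightarrow> (nat \<Rightarrow> nat \<Rightarrow> int) \<Rightarrow> real mat" where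
  "Sp_adjacency n p E \<theta> = mat (n + p * length E) (n + p * length E) (\<lambda>(a, b).
     of_int (Sp_entry n p E \<theta> a b + Sp_entry n p E \<theta> b a))"

definition has_spectrum :: "real mat \<Rightarrow> real multiset \<Rightarrow> bool" where
  "has_spectrum A S \<longleftrightarrow> char_poly A = prod_mset (image_mset (\<lambda>a. [:-a, 1:]) S)"

definition pm_sqrt :: "nat \<Rightarrow> real multiset \<Rightarrow> real multiset" where
  "pm_sqrt p M = sum_mset (image_mset (\<lambda>\<mu>. {# sqrt (real p * \<mu>), - sqrt (real p * \<mu>) #}) M)"

end

theory Submission
  imports Defs
begin



definition W :: "(nat \<times> nat) list \<Rightarrow> nat list \<Rightarrow> nat list \<Rightarrow> bool" where
  "W E vs es \<longleftrightarrow> length vs = Suc (length es) \<and>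
     (\<forall>i<length es. es!i < length E \<and> ends E (es!i) = {vs!i, vs!Suc i})"

lemma W_single: "W E [u] []" by (simp add: W_def)

lemma W_snoc: assumes "W E vs es" "j < length E" "ends E j = {last vs, w}"
  shows "W E (vs @ [w]) (es @ [j])"
proof -
  have "vs \<noteq> []" using assms(1) W_def by auto
  then have "last vs = vs ! length es" using assms(1) W_def by (simp add: last_conv_nth)
  then show ?thesis using assms unfolding W_def
    by (auto simp: nth_append less_Suc_eq)
qed

lemma W_take: assumes "W E vs es" "j \<le> length es"
  shows "W E (take (Suc j) vs) (take j es)"
  using assms unfolding W_def by auto

lemma W_drop: assumes "W E vs es" "i \<le> length es"
  shows "W E (drop i vs) (drop i es)"
  using assms unfolding W_def by (auto simp: add.commute)

lemma W_rev: assumes "W E vs es" shows "W E (rev vs) (rev es)"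
  unfolding W_def
proof (intro conjI allI impI)
  show "length (rev vs) = Suc (length (rev es))" using assms W_def by auto
next
  fix i assume i: "i < length (rev es)"
  let ?k = "length es"
  have lv: "length vs = Suc ?k" using assms W_def by auto
  have "es ! (?k - Suc i) < length E \<and> ends E (es ! (?k - Suc i)) = {vs ! (?k - Suc i), vs ! Suc (?k - Suc i)}"
    using assms i unfolding W_def by auto
  moreover have "rev es ! i = es ! (?k - Suc i)" using i by (simp add: rev_nth)
  moreover have "rev vs ! i = vs ! Suc (?k - Suc i)" using i lv by (simp add: rev_nth Suc_diff_Suc)
  moreover have "rev vs ! Suc i = vs ! (?k - Suc i)" using i lv by (simp add: rev_nth)
  ultimately show "rev es ! i < length E" "ends E (rev es ! i) = {rev vs ! i, rev vs ! Suc i}"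
    by auto
qed

lemma W_append: assumes "W E vs1 es1" "W E vs2 es2" "last vs1 = hd vs2"
  shows "W E (vs1 @ tl vs2) (es1 @ es2)"
  using assms(2,3)
proof (induction es2 arbitrary: vs2 rule: rev_induct)
  case Nil
  then obtain u where "vs2 = [u]" unfolding W_def by (cases vs2) auto
  then show ?case using assms(1) by simp
next
  case (snoc j es2)
  have lv: "length vs2 = Suc (Suc (length es2))" using snoc.prems W_def by auto
  define vs2' where "vs2' = butlast vs2"
  define w where "w = last vs2"
  have vs2: "vs2 = vs2' @ [w]" using lv unfolding vs2'_def w_def
    by (metis append_butlast_last_id list.size(3) nat.simps(3))
  have lv': "length vs2' = Suc (length es2)" using lv vs2 by simp
  have W': "W E vs2' es2" unfolding W_def
  proof (intro conjI allI impI)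
    show "length vs2' = Suc (length es2)" by (fact lv')
  next
    fix i assume i: "i < length es2"
    then have "(es2 @ [j]) ! i < length E \<and> ends E ((es2 @ [j]) ! i) = {vs2 ! i, vs2 ! Suc i}"
      using snoc.prems(1) unfolding W_def by auto
    then show "es2 ! i < length E" "ends E (es2 ! i) = {vs2' ! i, vs2' ! Suc i}"
      using i lv' unfolding vs2 by (auto simp: nth_append)
  qed
  have hd': "last vs1 = hd vs2'" using snoc.prems(2) vs2 lv' by (cases vs2') auto
  have IH: "W E (vs1 @ tl vs2') (es1 @ es2)" using snoc.IH[OF W' hd'] .
  have ej: "j < length E" "ends E j = {vs2 ! length es2, vs2 ! Suc (length es2)}"
    using snoc.prems(1) unfolding W_def by (auto simp: nth_append)
  have l1: "last (vs1 @ tl vs2') = vs2 ! length es2"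
  proof (cases "tl vs2' = []")
    case True
    then have "length es2 = 0" using lv' by (cases vs2') auto
    then show ?thesis using hd' vs2 lv' True by (cases vs2') auto
  next
    case False
    then have "last (vs1 @ tl vs2') = last vs2'" by (cases vs2') auto
    also have "\<dots> = vs2' ! length es2" using lv' by (metis diff_Suc_1 last_conv_nth list.size(3) nat.distinct(1))
    also have "\<dots> = vs2 ! length es2" using lv' vs2 by (simp add: nth_append)
    finally show ?thesis .
  qed
  have l2: "vs2 ! Suc (length es2) = w" using vs2 lv' by (simp add: nth_append)
  have "W E ((vs1 @ tl vs2') @ [w]) ((es1 @ es2) @ [j])"
    by (rule W_snoc[OF IH ej(1)]) (simp add: ej(2) l1 l2)
  moreover have "tl vs2 = tl vs2' @ [w]" using vs2 lv' by (cases vs2') auto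
  ultimately show ?case by simp
qed

lemma rtranclp_walk: assumes "(adj E)\<^sup>*\<^sup>* u v"
  shows "\<exists>vs es. W E vs es \<and> hd vs = u \<and> last vs = v"
  using assms
proof (induction rule: rtranclp_induct)
  case base
  then show ?case using W_single by fastforce
next
  case (step y z)
  then obtain vs es where "W E vs es" "hd vs = u" "last vs = y" by blast
  moreover obtain j where "j < length E" "ends E j = {y, z}" using step(2) adj_def by auto
  ultimately have "W E (vs @ [z]) (es @ [j])" "hd (vs @ [z]) = u" "last (vs @ [z]) = z"
    using W_snoc[of E vs es j z] by (auto simp: W_def hd_append)
  then show ?case by blast
qed

lemma ends_inj: assumes "signed_graph n E \<sigma>" "i < length E" "j < length E" "ends E i = ends E j"
  shows "i = j"
proof -
  have "distinct (map (ends E) [0..<length E])" using assms(1) signed_graph_def by auto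
  then have "inj_on (ends E) {0..<length E}" by (simp add: distinct_map)
  thus ?thesis using assms by (auto dest: inj_onD)
qed

lemma sg_edge: assumes "signed_graph n E \<sigma>" "j < length E"
  shows "fst (E!j) < n" "snd (E!j) < n" "fst (E!j) \<noteq> snd (E!j)" "\<sigma> j = 1 \<or> \<sigma> j = -1"
  using assms unfolding signed_graph_def by auto

lemma W_edges: "W E vs es \<Longrightarrow> x \<in> set es \<Longrightarrow> x < length E"
  unfolding W_def by (auto simp: in_set_conv_nth)

lemma prod_pm1: "(\<forall>x\<in>set es. \<sigma> x = 1 \<or> \<sigma> x = -1) \<Longrightarrow>
   prod_list (map \<sigma> es) = (-1::int) ^ length (filter (\<lambda>j. \<sigma> j = -1) es)"
  by (induction es) auto

lemma prod_pm1': assumes "signed_graph n E \<sigma>" "\<forall>x\<in>set es. x < length E"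
  shows "prod_list (map \<sigma> es) = 1 \<or> prod_list (map \<sigma> es) = -1"
proof -
  have "\<forall>x\<in>set es. \<sigma> x = 1 \<or> \<sigma> x = -1" using assms sg_edge(4) by blast
  from prod_pm1[OF this] show ?thesis by (metis neg_one_even_power neg_one_odd_power)
qed

lemma closed_walk:
  assumes sg: "signed_graph n E \<sigma>" and bal: "balanced E \<sigma>"
  shows "W E vs es \<Longrightarrow> hd vs = last vs \<Longrightarrow> prod_list (map \<sigma> es) = 1"
proof (induction "length es" arbitrary: vs es rule: less_induct)
  case less
  define k where "k = length es"
  have lv: "length vs = Suc k" using less.prems W_def k_def by auto
  have hd0: "hd vs = vs!0" using lv by (cases vs) auto
  have lastk: "last vs = vs ! k" using lv by (metis diff_Suc_1 last_conv_nth list.size(3) nat.distinct(1))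
  have cl: "vs ! 0 = vs ! k" using less.prems(2) hd0 lastk by simp
  have edge: "es!i < length E \<and> ends E (es!i) = {vs!i, vs!Suc i}" if "i < k" for i
    using less.prems(1) that unfolding W_def k_def by auto
  show ?case
  proof (cases "\<exists>i j. i < j \<and> j < k \<and> vs!i = vs!j")
    case True
    then obtain i j where ij: "i < j" "j < k" "vs!i = vs!j" by blast
    define vsA where "vsA = take (Suc (j - i)) (drop i vs)"
    define esA where "esA = take (j-i) (drop i es)"
    have WA: "W E vsA esA"
      using W_take[OF W_drop[OF less.prems(1), of i], of "j-i"] ij unfolding vsA_def esA_def k_def by auto
    have cA: "hd vsA = last vsA"
    proof -
      have lA: "length vsA = Suc (j-i)" using ij lv unfolding vsA_def by simp
      have "hd vsA = vsA ! 0" using lA by (cases vsA) auto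
      also have "\<dots> = vs ! i" using ij lv unfolding vsA_def by simp
      finally have "hd vsA = vs ! i" .
      moreover have "last vsA = vsA ! (j - i)" using lA
        by (metis diff_Suc_1 last_conv_nth list.size(3) nat.distinct(1))
      moreover have "vsA ! (j - i) = vs ! j" using ij lv unfolding vsA_def by simp
      ultimately show ?thesis using ij by simp
    qed
    have pA: "prod_list (map \<sigma> esA) = 1" using less.hyps[OF _ WA cA] ij
      by (simp add: esA_def k_def)
    define vsB where "vsB = take (Suc i) vs @ tl (drop j vs)"
    define esB where "esB = take i es @ drop j es"
    have WB: "W E vsB esB" unfolding vsB_def esB_def
    proof (rule W_append[OF W_take[OF less.prems(1), of i] W_drop[OF less.prems(1), of j]])
      show "i \<le> length es" "j \<le> length es" using ij k_def by auto
      show "last (take (Suc i) vs) = hd (drop j vs)"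
      proof -
        have lt: "length (take (Suc i) vs) = Suc i" using ij lv by simp
        have "last (take (Suc i) vs) = take (Suc i) vs ! i" using lt
          by (metis diff_Suc_1 last_conv_nth list.size(3) nat.distinct(1))
        also have "\<dots> = vs ! i" by simp
        finally show ?thesis using ij lv by (simp add: hd_drop_conv_nth)
      qed
    qed
    have cB: "hd vsB = last vsB"
    proof -
      have "hd vsB = vs ! 0" unfolding vsB_def using lv by (cases vs) auto
      moreover have "last vsB = last vs" unfolding vsB_def using ij lv
        by (simp add: drop_Suc[symmetric] tl_drop)
      ultimately show ?thesis using cl lastk by simp
    qed
    have pB: "prod_list (map \<sigma> esB) = 1" using less.hyps[OF _ WB cB] ij
      by (simp add: esB_def k_def)
    have "drop j es = drop (j-i) (drop i es)" using ij by simp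
    then have "esA @ drop j es = drop i es" unfolding esA_def by (metis append_take_drop_id)
    then have eq: "es = take i es @ esA @ drop j es" by simp
    have "prod_list (map \<sigma> es) = prod_list (map \<sigma> esA) * prod_list (map \<sigma> esB)"
      by (subst eq) (simp add: esB_def algebra_simps)
    then show ?thesis using pA pB by simp
  next
    case False
    have dv: "i = j" if "i < k" "j < k" "vs!i = vs!j" for i j
    proof (rule ccontr)
      assume "i \<noteq> j"
      show False
      proof (cases "i < j")
        case True then show ?thesis using False that by blast
      next
        case F2: False
        then have "j < i \<and> i < k \<and> vs!j = vs!i" using that \<open>i \<noteq> j\<close> by simp
        then show ?thesis using False by blast
      qed
    qed
    consider "k = 0" | "k = 1" | "k = 2" | "k \<ge> 3" by linarith
    then show ?thesis
    proof cases
      case 1 then show ?thesis using k_def by simp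
    next
      case 2
      have "es!0 < length E" "ends E (es!0) = {vs!0, vs!1}" using edge[of 0] 2 by auto
      moreover have "ends E (es!0) = {fst (E!(es!0)), snd (E!(es!0))}" by (simp add: ends_def)
      moreover have "vs!1 = vs!0" using cl 2 by simp
      ultimately have False using sg_edge(3)[OF sg, of "es!0"]
        by (auto simp: doubleton_eq_iff)
      then show ?thesis ..
    next
      case 3
      have e0: "es!0 < length E" "ends E (es!0) = {vs!0, vs!1}" using edge[of 0] 3 by auto
      have e1: "es!1 < length E" "ends E (es!1) = {vs!1, vs!0}" using edge[of 1] 3 cl
        by (auto simp: numeral_2_eq_2)
      have "es!0 = es!1" using ends_inj[OF sg e0(1) e1(1)] e0 e1 by (simp add: insert_commute)
      moreover have esf: "es = [es!0, es!1]" using 3 k_def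
        by (auto simp: numeral_2_eq_2 length_Suc_conv)
      have "prod_list (map \<sigma> es) = \<sigma> (es!0) * \<sigma> (es!1)" by (subst esf) simp
      ultimately have "prod_list (map \<sigma> es) = \<sigma> (es!0) * \<sigma> (es!0)" by simp
      moreover have "\<sigma> (es!0) = 1 \<or> \<sigma> (es!0) = -1" using sg_edge(4)[OF sg e0(1)] .
      ultimately show ?thesis by auto
    next
      case 4
      define cs where "cs = butlast vs"
      have lcs: "length cs = k" using lv cs_def by simp
      have csn: "cs ! i = vs ! i" if "i < k" for i using that lv cs_def by (simp add: nth_butlast)
      have "is_cycle E cs es" unfolding is_cycle_def
      proof (intro conjI allI impI)
        show "3 \<le> length cs" using 4 lcs by simp
        show "length es = length cs" using lcs k_def by simp
        show "distinct cs" unfolding distinct_conv_nth lcs using dv csn by auto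
      next
        fix i assume i: "i < length cs"
        show "es ! i < length E" using edge i lcs by auto
        have "cs ! ((i + 1) mod length cs) = vs ! Suc i"
        proof (cases "Suc i < k")
          case True then show ?thesis using csn lcs by simp
        next
          case False then have "Suc i = k" using i lcs by simp
          then show ?thesis using csn lcs cl 4 by simp
        qed
        then show "ends E (es ! i) = {cs ! i, cs ! ((i + 1) mod length cs)}"
          using edge[of i] i lcs csn by auto
      next
        show "distinct es" unfolding distinct_conv_nth
        proof (intro allI impI notI)
          fix a b assume ab: "a < length es" "b < length es" "a \<noteq> b" "es ! a = es ! b"
          have key: False if ab: "a < b" "b < k" "es ! a = es ! b" for a b
          proof -
            have "{vs!a, vs!Suc a} = {vs!b, vs!Suc b}" using edge[of a] edge[of b] ab by auto
            moreover have "vs!a \<noteq> vs!b" using dv[of a b] ab by auto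
            ultimately have x1: "vs!a = vs!Suc b" and x2: "vs!Suc a = vs!b" by (auto simp: doubleton_eq_iff)
            have "Suc b = k"
            proof (rule ccontr)
              assume "Suc b \<noteq> k"
              then have "Suc b < k" using ab by simp
              then show False using dv[of a "Suc b"] x1 ab by simp
            qed
            then have "vs!a = vs!0" using x1 cl by simp
            then have "a = 0" using dv[of a 0] ab by simp
            then have "vs!1 = vs!b" using x2 by simp
            then have "b = 1" using dv[of 1 b] ab 4 by simp
            then show False using \<open>Suc b = k\<close> 4 by simp
          qed
          show False using ab k_def key[of a b] key[of b a] by (cases "a < b") auto
        qed
      qed
      then have "even (length (filter (\<lambda>j. \<sigma> j = -1) es))" using bal balanced_def by blast
      moreover have "\<forall>x\<in>set es. \<sigma> x = 1 \<or> \<sigma> x = -1"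
        using W_edges[OF less.prems(1)] sg_edge(4)[OF sg] by blast
      then have "prod_list (map \<sigma> es) = (-1::int) ^ length (filter (\<lambda>j. \<sigma> j = -1) es)"
        by (rule prod_pm1)
      ultimately show ?thesis by simp
    qed
  qed
qed



lemma last_append_tl: "vs2 \<noteq> [] \<Longrightarrow> last vs1 = hd vs2 \<Longrightarrow> vs1 \<noteq> [] \<Longrightarrow> last (vs1 @ tl vs2) = last vs2"
  by (cases vs2) auto

lemma W_ne: "W E vs es \<Longrightarrow> vs \<noteq> []" unfolding W_def by auto

lemma switching:
  assumes sg: "signed_graph n E \<sigma>" and conn: "connected_graph n E" and bal: "balanced E \<sigma>"
  shows "\<exists>s. (\<forall>v<n. s v = 1 \<or> s v = (-1::int)) \<and>
             (\<forall>j<length E. \<sigma> j = s (fst (E!j)) * s (snd (E!j)))"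
proof -
  have n1: "0 < n" using conn connected_graph_def by auto
  have ex: "\<exists>vs es. W E vs es \<and> hd vs = 0 \<and> last vs = v" if "v < n" for v
    using rtranclp_walk conn n1 that unfolding connected_graph_def by blast
  define P where "P v = (SOME x. W E (fst x) (snd x) \<and> hd (fst x) = 0 \<and> last (fst x) = v)" for v
  have P: "W E (fst (P v)) (snd (P v)) \<and> hd (fst (P v)) = 0 \<and> last (fst (P v)) = v" if v: "v < n" for v
  proof -
    obtain vs es where "W E vs es \<and> hd vs = 0 \<and> last vs = v" using ex[OF v] by blast
    then have "\<exists>x. W E (fst x) (snd x) \<and> hd (fst x) = 0 \<and> last (fst x) = v" by auto
    from someI_ex[OF this] show ?thesis unfolding P_def .
  qed
  define s where "s v = prod_list (map \<sigma> (snd (P v)))" for v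
  have pm: "prod_list (map \<sigma> es) = 1 \<or> prod_list (map \<sigma> es) = -1" if "W E vs es" for vs es
    using prod_pm1'[OF sg] W_edges[OF that] by blast
  have sw: "prod_list (map \<sigma> es) = s v" if v: "v < n" and w: "W E vs es" "hd vs = 0" "last vs = v" for v vs es
  proof -
    obtain vs' es' where P': "P v = (vs', es')" by fastforce
    with P[OF v] have W': "W E vs' es'" "hd vs' = 0" "last vs' = v" by auto
    have Wr: "W E (rev vs') (rev es')" by (rule W_rev[OF W'(1)])
    have ne: "rev vs' \<noteq> []" using W_ne[OF W'(1)] by simp
    have hdr: "hd (rev vs') = v" using W'(3) W_ne[OF W'(1)] by (simp add: hd_rev)
    have lr: "last (rev vs') = 0" using W'(2) W_ne[OF W'(1)] by (simp add: last_rev)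
    have Wc: "W E (vs @ tl (rev vs')) (es @ rev es')"
      by (rule W_append[OF w(1) Wr]) (simp add: hdr w(3))
    have "hd (vs @ tl (rev vs')) = 0" using w W_ne[OF w(1)] by simp
    moreover have "last (vs @ tl (rev vs')) = 0"
      using last_append_tl[OF ne] hdr w(3) W_ne[OF w(1)] lr by simp
    ultimately have "prod_list (map \<sigma> (es @ rev es')) = 1"
      using closed_walk[OF sg bal Wc] by simp
    then have "prod_list (map \<sigma> es) * prod_list (map \<sigma> es') = 1"
      by (simp add: rev_map[symmetric] prod_list.rev)
    moreover have "s v = prod_list (map \<sigma> es')" using P' s_def by simp
    ultimately show ?thesis using pm[OF W'(1)] by auto
  qed
  show ?thesis
  proof (intro exI conjI allI impI)
    fix v assume v: "v < n"
    show "s v = 1 \<or> s v = -1" using pm[of "fst (P v)" "snd (P v)"] P[OF v] unfolding s_def by blast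
  next
    fix j assume j: "j < length E"
    let ?a = "fst (E!j)" and ?b = "snd (E!j)"
    have ab: "?a < n" "?b < n" using sg_edge[OF sg j] by auto
    obtain vs' es' where P': "P ?a = (vs', es')" by fastforce
    with P[OF ab(1)] have W': "W E vs' es'" "hd vs' = 0" "last vs' = ?a" by auto
    have "W E (vs' @ [?b]) (es' @ [j])"
      by (rule W_snoc[OF W'(1) j]) (simp add: W'(3) ends_def)
    moreover have "hd (vs' @ [?b]) = 0" using W'(2) W_ne[OF W'(1)] by simp
    moreover have "last (vs' @ [?b]) = ?b" by simp
    ultimately have "prod_list (map \<sigma> (es' @ [j])) = s ?b" using sw[OF ab(2)] by blast
    moreover have "prod_list (map \<sigma> es') = s ?a" using sw[OF ab(1) W'] .
    ultimately have "s ?b = s ?a * \<sigma> j" by simp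
    moreover have "s ?a = 1 \<or> s ?a = -1" using pm[of "fst (P ?a)" "snd (P ?a)"] P[OF ab(1)] unfolding s_def by blast
    ultimately show "\<sigma> j = s ?a * s ?b" by auto
  qed
qed

lemma edge_count:
  assumes sg: "signed_graph n E \<sigma>" and conn: "connected_graph n E"
  shows "n \<le> Suc (length E)"
proof -
  have n1: "0 < n" using conn connected_graph_def by auto
  have ex: "\<exists>vs es. W E vs es \<and> hd vs = 0 \<and> last vs = v" if "v < n" for v
    using rtranclp_walk conn n1 that unfolding connected_graph_def by blast
  define d where "d v = (LEAST l. \<exists>vs es. W E vs es \<and> hd vs = 0 \<and> last vs = v \<and> length es = l)" for v
  have dmin: "d v \<le> length es" if "W E vs es" "hd vs = 0" "last vs = v" for v vs es
    unfolding d_def by (rule Least_le) (use that in blast)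
  have dex: "\<exists>vs es. W E vs es \<and> hd vs = 0 \<and> last vs = v \<and> length es = d v" if v: "v < n" for v
    unfolding d_def by (rule LeastI_ex) (use ex[OF v] in blast)
  have par: "\<exists>j<length E. \<exists>u. ends E j = {u, v} \<and> Suc (d u) = d v" if v: "v < n" "v \<noteq> 0" for v
  proof -
    obtain vs es where w: "W E vs es" "hd vs = 0" "last vs = v" "length es = d v" using dex[OF v(1)] by blast
    have lv: "length vs = Suc (d v)" using w W_def by auto
    have "d v \<noteq> 0"
    proof
      assume "d v = 0"
      then obtain z where "vs = [z]" using lv by (cases vs) auto
      then show False using w v by simp
    qed
    then obtain k where k: "d v = Suc k" by (cases "d v") auto
    have ej: "es ! k < length E" "ends E (es ! k) = {vs!k, vs!Suc k}" using w(1,4) k unfolding W_def by auto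
    have lastv: "vs ! Suc k = v" using w(3) lv k by (metis diff_Suc_1 last_conv_nth list.size(3) nat.distinct(1))
    have Wu: "W E (take (Suc k) vs) (take k es)" using W_take[OF w(1)] w(4) k by simp
    have hu: "hd (take (Suc k) vs) = 0" using w(2) W_ne[OF w(1)] by (cases vs) auto
    have lt: "length (take (Suc k) vs) = Suc k" using lv k by simp
    have "last (take (Suc k) vs) = take (Suc k) vs ! k" using lt
      by (metis diff_Suc_1 last_conv_nth list.size(3) nat.distinct(1))
    then have lu: "last (take (Suc k) vs) = vs ! k" by simp
    have du: "d (vs!k) \<le> k" using dmin[OF Wu hu lu] w(4) k by simp
    have "vs!k \<in> ends E (es!k)" using ej(2) by simp
    then have uk: "vs ! k < n" using sg_edge[OF sg ej(1)] unfolding ends_def by auto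
    obtain vs' es' where w': "W E vs' es'" "hd vs' = 0" "last vs' = vs ! k" "length es' = d (vs!k)"
      using dex[OF uk] by blast
    have "W E (vs' @ [v]) (es' @ [es!k])" by (rule W_snoc[OF w'(1) ej(1)]) (simp add: ej(2) w'(3) lastv)
    moreover have "hd (vs' @ [v]) = 0" using w'(2) W_ne[OF w'(1)] by simp
    ultimately have "d v \<le> Suc (d (vs!k))" using dmin[of "vs' @ [v]" "es' @ [es!k]" v] w'(4) by simp
    then have "Suc (d (vs!k)) = d v" using du k by simp
    then show ?thesis using ej lastv by blast
  qed
  define f where "f v = (SOME j. j < length E \<and> (\<exists>u. ends E j = {u, v} \<and> Suc (d u) = d v))" for v
  have fP: "f v < length E \<and> (\<exists>u. ends E (f v) = {u, v} \<and> Suc (d u) = d v)" if "v \<in> {1..<n}" for v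
    unfolding f_def by (rule someI_ex) (use par that in auto)
  have "inj_on f {1..<n}"
  proof (rule inj_onI)
    fix v w assume v: "v \<in> {1..<n}" and w: "w \<in> {1..<n}" and fe: "f v = f w"
    obtain u where u: "ends E (f v) = {u, v}" "Suc (d u) = d v" using fP[OF v] by blast
    obtain u' where u': "ends E (f w) = {u', w}" "Suc (d u') = d w" using fP[OF w] by blast
    show "v = w"
    proof (rule ccontr)
      assume "v \<noteq> w"
      then have "w = u" "v = u'" using u u' fe by (auto simp: doubleton_eq_iff)
      then show False using u u' by simp
    qed
  qed
  moreover have "f ` {1..<n} \<subseteq> {..<length E}" using fP by auto
  ultimately have "card {1..<n} \<le> card {..<length E}" by (rule card_inj_on_le) simp
  then show ?thesis by simp
qed

lemma kernel_balanced:
  fixes x :: "nat \<Rightarrow> real"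
  assumes sg: "signed_graph n E \<sigma>" and conn: "connected_graph n E"
    and xe: "\<forall>j<length E. x (snd (E!j)) = of_int (\<sigma> j) * x (fst (E!j))"
    and nz: "u0 < n" "x u0 \<noteq> 0"
  shows "balanced E \<sigma>"
proof -
  have edge_rel: "x b = of_int (\<sigma> j) * x a" if j: "j < length E" "ends E j = {a,b}" for j a b
  proof -
    have s: "\<sigma> j = 1 \<or> \<sigma> j = -1" using sg_edge(4)[OF sg j(1)] .
    have e: "x (snd (E!j)) = of_int (\<sigma> j) * x (fst (E!j))" using xe j(1) by blast
    from j(2) have "(a = fst (E!j) \<and> b = snd (E!j)) \<or> (a = snd (E!j) \<and> b = fst (E!j))"
      unfolding ends_def by (auto simp: doubleton_eq_iff)
    then show ?thesis using e s by auto
  qed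
  have absx: "\<bar>x a\<bar> = \<bar>x b\<bar>" if "(adj E)\<^sup>*\<^sup>* a b" for a b
    using that
  proof (induction rule: rtranclp_induct)
    case base then show ?case by simp
  next
    case (step y z)
    obtain j where j: "j < length E" "ends E j = {y, z}" using step(2) adj_def by auto
    have "x z = of_int (\<sigma> j) * x y" using edge_rel[OF j] .
    moreover have "\<sigma> j = 1 \<or> \<sigma> j = -1" using sg_edge(4)[OF sg j(1)] .
    ultimately have "\<bar>x z\<bar> = \<bar>x y\<bar>" by auto
    then show ?case using step(3) by simp
  qed
  have xnz: "x v \<noteq> 0" if "v < n" for v
    using absx[of u0 v] nz that conn unfolding connected_graph_def by auto
  show ?thesis unfolding balanced_def
  proof (intro allI impI)
    fix vs es assume cyc: "is_cycle E vs es"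
    define k where "k = length vs"
    have k3: "k \<ge> 3" "length es = k" using cyc k_def is_cycle_def by auto
    have ce: "es ! i < length E \<and> ends E (es ! i) = {vs ! i, vs ! ((i + 1) mod k)}" if "i < k" for i
      using cyc that k_def is_cycle_def by auto
    have v0: "vs ! 0 < n"
    proof -
      have "es!0 < length E" "vs ! 0 \<in> ends E (es!0)" using ce[of 0] k3 by auto
      then show ?thesis using sg_edge[OF sg] unfolding ends_def by auto
    qed
    have claim: "x (vs ! (l mod k)) = of_int (prod_list (map \<sigma> (take l es))) * x (vs ! 0)" if "l \<le> k" for l
      using that
    proof (induction l)
      case 0 then show ?case by simp
    next
      case (Suc l)
      then have lk: "l < k" by simp
      have "take (Suc l) es = take l es @ [es ! l]" using lk k3 by (simp add: take_Suc_conv_app_nth)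
      moreover have "x (vs ! (Suc l mod k)) = of_int (\<sigma> (es!l)) * x (vs ! l)"
        using edge_rel[of "es!l" "vs!l" "vs ! (Suc l mod k)"] ce[OF lk] by simp
      moreover have "l mod k = l" using lk by simp
      ultimately show ?case using Suc.IH lk by (simp add: algebra_simps)
    qed
    have "x (vs ! 0) = of_int (prod_list (map \<sigma> es)) * x (vs ! 0)"
      using claim[of k] k3 by simp
    then have p1: "prod_list (map \<sigma> es) = 1" using xnz[OF v0] by simp
    have "\<forall>y\<in>set es. \<sigma> y = 1 \<or> \<sigma> y = -1"
    proof
      fix y assume "y \<in> set es"
      then obtain i where "i < k" "y = es ! i" using k3 by (auto simp: in_set_conv_nth)
      then show "\<sigma> y = 1 \<or> \<sigma> y = -1" using ce sg_edge(4)[OF sg] by blast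
    qed
    from prod_pm1[OF this] p1 have "(-1::int) ^ length (filter (\<lambda>j. \<sigma> j = -1) es) = 1" by simp
    then show "even (length (filter (\<lambda>j. \<sigma> j = -1) es))"
      by (cases "even (length (filter (\<lambda>j. \<sigma> j = -1) es))") auto
  qed
qed



definition Nmat :: "nat \<Rightarrow> nat \<Rightarrow> (nat \<times> nat) list \<Rightarrow> (nat \<Rightarrow> nat \<Rightarrow> int) \<Rightarrow> real mat" where
  "Nmat n p E \<theta> = mat n (p * length E) (\<lambda>(u,c). real_of_int (Sp_entry n p E \<theta> u (n + c)))"

lemma Nmat_carrier: "Nmat n p E \<theta> \<in> carrier_mat n (p * length E)"
  unfolding Nmat_def by simp

definition gfun :: "(nat \<times> nat) list \<Rightarrow> (nat \<Rightarrow> nat \<Rightarrow> int) \<Rightarrow> nat \<Rightarrow> nat \<Rightarrow> real" where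
  "gfun E \<theta> u j = (if u \<in> ends E j then real_of_int (\<theta> u j) else 0)"

lemma Nmat_entry: "u < n \<Longrightarrow> c < p * length E \<Longrightarrow> Nmat n p E \<theta> $$ (u, c) = gfun E \<theta> u (c div p)"
  unfolding Nmat_def gfun_def Sp_entry_def by simp

lemma Sp_block: "Sp_adjacency n p E \<theta> =
  four_block_mat (0\<^sub>m n n) (Nmat n p E \<theta>) (transpose_mat (Nmat n p E \<theta>)) (0\<^sub>m (p * length E) (p * length E))"
  by (rule eq_matI) (auto simp: Sp_adjacency_def Nmat_def Sp_entry_def)

lemma sum_div: assumes "0 < p"
  shows "(\<Sum>c<p * m. f (c div p)) = (\<Sum>j<m. of_nat p * (f j :: real))"
proof (induction m)
  case 0 then show ?case by simp
next
  case (Suc m)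
  have "{..<p * Suc m} = {..<p * m} \<union> {p * m..<p * m + p}" by (auto simp: algebra_simps)
  moreover have "(\<Sum>c\<in>{..<p * m} \<union> {p * m..<p * m + p}. f (c div p)) = (\<Sum>c<p * m. f (c div p)) + (\<Sum>c\<in>{p * m..<p * m + p}. f (c div p))"
    by (rule sum.union_disjoint) auto
  ultimately have "(\<Sum>c<p * Suc m. f (c div p)) = (\<Sum>c<p * m. f (c div p)) + (\<Sum>c\<in>{p * m..<p * m + p}. f (c div p))"
    by simp
  moreover have "(\<Sum>c\<in>{p * m..<p * m + p}. f (c div p)) = (\<Sum>c\<in>{p * m..<p * m + p}. f m)"
  proof (rule sum.cong[OF refl])
    fix c assume "c \<in> {p * m..<p * m + p}"
    then have "c div p = m" using assms by (auto intro: div_nat_eqI simp: algebra_simps)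
    then show "f (c div p) = f m" by simp
  qed
  ultimately show ?case using Suc by simp
qed

lemma ends_fs: "ends E j = {fst (E!j), snd (E!j)}" by (simp add: ends_def)

lemma orient_theta: assumes "orientation E \<sigma> \<theta>" "j < length E" "u \<in> ends E j"
  shows "\<theta> u j = 1 \<or> \<theta> u j = -1"
  using assms unfolding orientation_def ends_def by auto

lemma orient_prod: assumes "orientation E \<sigma> \<theta>" "j < length E" "ends E j = {u, v}" "u \<noteq> v"
  shows "\<theta> u j * \<theta> v j = - \<sigma> j"
proof -
  have o: "\<theta> (fst (E!j)) j * \<theta> (snd (E!j)) j = - \<sigma> j" using assms(1,2) orientation_def by auto
  from assms(3,4) have "(u = fst (E!j) \<and> v = snd (E!j)) \<or> (u = snd (E!j) \<and> v = fst (E!j))"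
    unfolding ends_def by (auto simp: doubleton_eq_iff)
  then show ?thesis using o by (auto simp: mult.commute)
qed

lemma two_in_ends: assumes "u \<in> ends E j" "v \<in> ends E j" "u \<noteq> v" shows "ends E j = {u, v}"
  using assms unfolding ends_def by auto

lemma adjacency_entry: assumes sg: "signed_graph n E \<sigma>" and uv: "u < n" "v < n"
  shows "adjacency n E \<sigma> $$ (u, v) =
    (if \<exists>j < length E. ends E j = {u, v} \<and> u \<noteq> v then
       real_of_int (\<sigma> (THE j. j < length E \<and> ends E j = {u, v})) else 0)"
  unfolding adjacency_def using uv by simp

lemma laplacian_entry: assumes "u < n" "v < n"
  shows "laplacian n E \<sigma> $$ (u, v) = (if u = v then real (degree E u) else 0) - adjacency n E \<sigma> $$ (u, v)"
  unfolding laplacian_def using assms by (simp add: adjacency_def)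

lemma gg_sum: assumes sg: "signed_graph n E \<sigma>" and or: "orientation E \<sigma> \<theta>" and uv: "u < n" "v < n"
  shows "(\<Sum>j<length E. gfun E \<theta> u j * gfun E \<theta> v j) = laplacian n E \<sigma> $$ (u, v)"
proof (cases "u = v")
  case True
  have "(\<Sum>j<length E. gfun E \<theta> u j * gfun E \<theta> v j) = (\<Sum>j<length E. if u \<in> ends E j then 1 else 0)"
  proof (rule sum.cong[OF refl])
    fix j assume "j \<in> {..<length E}"
    then show "gfun E \<theta> u j * gfun E \<theta> v j = (if u \<in> ends E j then 1 else 0)"
      using orient_theta[OF or, of j u] True unfolding gfun_def by auto
  qed
  also have "\<dots> = (\<Sum>j\<in>{j\<in>{..<length E}. u \<in> ends E j}. 1)"
    by (rule sum.inter_filter[symmetric]) simp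
  also have "\<dots> = real (card {j\<in>{..<length E}. u \<in> ends E j})" by simp
  also have "{j\<in>{..<length E}. u \<in> ends E j} = {j. j < length E \<and> u \<in> ends E j}" by auto
  also have "real (card \<dots>) = real (degree E u)" unfolding degree_def ..
  finally show ?thesis using True uv by (simp add: laplacian_entry adjacency_entry[OF sg])
next
  case False
  have summ: "gfun E \<theta> u j * gfun E \<theta> v j =
     (if ends E j = {u, v} then real_of_int (\<theta> u j * \<theta> v j) else 0)" for j
  proof (cases "ends E j = {u, v}")
    case True
    then have "u \<in> ends E j" "v \<in> ends E j" by auto
    then show ?thesis using True by (simp add: gfun_def)
  next
    case F: False
    then have "\<not> (u \<in> ends E j \<and> v \<in> ends E j)" using two_in_ends[of u E j v] False by blast
    then show ?thesis using F by (cases "u \<in> ends E j") (simp_all add: gfun_def)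
  qed
  show ?thesis
  proof (cases "\<exists>j < length E. ends E j = {u, v}")
    case True
    then obtain j0 where j0: "j0 < length E" "ends E j0 = {u, v}" by blast
    have "(\<Sum>j<length E. gfun E \<theta> u j * gfun E \<theta> v j) =
       (\<Sum>j<length E. if j = j0 then real_of_int (\<theta> u j0 * \<theta> v j0) else 0)"
    proof (rule sum.cong[OF refl])
      fix j assume j: "j \<in> {..<length E}"
      show "gfun E \<theta> u j * gfun E \<theta> v j = (if j = j0 then real_of_int (\<theta> u j0 * \<theta> v j0) else 0)"
      proof (cases "j = j0")
        case True then show ?thesis unfolding summ using j0 by simp
      next
        case F: False
        then have "ends E j \<noteq> {u, v}" using ends_inj[OF sg, of j j0] j j0 by auto
        then show ?thesis unfolding summ using F by simp
      qed
    qed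
    also have "\<dots> = - real_of_int (\<sigma> j0)" using j0 orient_prod[OF or j0 False] by simp
    also have "\<dots> = laplacian n E \<sigma> $$ (u, v)"
    proof -
      have "(THE j. j < length E \<and> ends E j = {u, v}) = j0"
      proof (rule the_equality)
        show "j0 < length E \<and> ends E j0 = {u, v}" using j0 by simp
        fix j assume "j < length E \<and> ends E j = {u, v}"
        then show "j = j0" using ends_inj[OF sg, of j j0] j0 by simp
      qed
      then show ?thesis using False uv j0 by (auto simp: laplacian_entry adjacency_entry[OF sg])
    qed
    finally show ?thesis .
  next
    case F2: False
    have "(\<Sum>j<length E. gfun E \<theta> u j * gfun E \<theta> v j) = 0"
      unfolding summ using F2 by (intro sum.neutral) auto
    moreover have "adjacency n E \<sigma> $$ (u, v) = 0" using F2 by (subst adjacency_entry[OF sg uv]) auto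
    ultimately show ?thesis using False uv by (simp add: laplacian_entry)
  qed
qed

lemma NNT: assumes sg: "signed_graph n E \<sigma>" and or: "orientation E \<sigma> \<theta>" and p: "0 < p"
  shows "Nmat n p E \<theta> * transpose_mat (Nmat n p E \<theta>) = real p \<cdot>\<^sub>m laplacian n E \<sigma>"
proof (rule eq_matI)
  show "dim_row (Nmat n p E \<theta> * transpose_mat (Nmat n p E \<theta>)) = dim_row (real p \<cdot>\<^sub>m laplacian n E \<sigma>)"
    by (simp add: Nmat_def laplacian_def adjacency_def)
  show "dim_col (Nmat n p E \<theta> * transpose_mat (Nmat n p E \<theta>)) = dim_col (real p \<cdot>\<^sub>m laplacian n E \<sigma>)"
    by (simp add: Nmat_def laplacian_def adjacency_def)
  fix u v assume "u < dim_row (real p \<cdot>\<^sub>m laplacian n E \<sigma>)" "v < dim_col (real p \<cdot>\<^sub>m laplacian n E \<sigma>)"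
  then have uv: "u < n" "v < n" by (auto simp: laplacian_def adjacency_def)
  let ?N = "Nmat n p E \<theta>"
  have "(?N * transpose_mat ?N) $$ (u, v) = (\<Sum>c\<in>{0..<p * length E}. ?N $$ (u, c) * ?N $$ (v, c))"
    using uv by (simp add: Nmat_def scalar_prod_def)
  also have "\<dots> = (\<Sum>c<p * length E. gfun E \<theta> u (c div p) * gfun E \<theta> v (c div p))"
    by (simp add: atLeast0LessThan Nmat_entry uv)
  also have "\<dots> = (\<Sum>j<length E. real p * (gfun E \<theta> u j * gfun E \<theta> v j))"
    by (rule sum_div[OF p])
  also have "\<dots> = real p * laplacian n E \<sigma> $$ (u, v)"
    by (simp add: sum_distrib_left[symmetric] gg_sum[OF sg or uv])
  finally show "(?N * transpose_mat ?N) $$ (u, v) = (real p \<cdot>\<^sub>m laplacian n E \<sigma>) $$ (u, v)"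
    using uv by (simp add: laplacian_def adjacency_def)
qed



lemma charpoly_block:
  fixes N :: "real mat"
  assumes N: "N \<in> carrier_mat n k"
  shows "char_poly (four_block_mat (0\<^sub>m n n) N (transpose_mat N) (0\<^sub>m k k)) * [:0,1:]^n
       = det ([:0,0,1:] \<cdot>\<^sub>m 1\<^sub>m n - map_mat (\<lambda>a. [:a:]) (N * transpose_mat N)) * [:0,1:]^k"
proof -
  let ?X = "[:0,1:] :: real poly"
  define Nh where "Nh = map_mat (\<lambda>a. [:a:]) N"
  have Nh: "Nh \<in> carrier_mat n k" using N Nh_def by simp
  have NhT: "transpose_mat Nh \<in> carrier_mat k n" using Nh by simp
  define S where "S = four_block_mat (0\<^sub>m n n) N (transpose_mat N) (0\<^sub>m k k)"
  have S: "S \<in> carrier_mat (n+k) (n+k)" using N S_def by auto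
  have cpm: "char_poly_matrix S = four_block_mat (?X \<cdot>\<^sub>m 1\<^sub>m n) (-Nh) (- transpose_mat Nh) (?X \<cdot>\<^sub>m 1\<^sub>m k)"
    by (rule eq_matI) (use N in \<open>auto simp: char_poly_matrix_def S_def Nh_def\<close>)
  define R where "R = four_block_mat (?X \<cdot>\<^sub>m 1\<^sub>m n) (0\<^sub>m n k) (transpose_mat Nh) (1\<^sub>m k)"
  have R: "R \<in> carrier_mat (n+k) (n+k)" using NhT R_def by auto
  have b1: "?X \<cdot>\<^sub>m 1\<^sub>m n * (?X \<cdot>\<^sub>m 1\<^sub>m n) + - Nh * transpose_mat Nh = [:0,0,1:] \<cdot>\<^sub>m 1\<^sub>m n - Nh * transpose_mat Nh"
    by (rule eq_matI) (use Nh in auto)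
  have b2: "?X \<cdot>\<^sub>m 1\<^sub>m n * 0\<^sub>m n k + - Nh * 1\<^sub>m k = - Nh"
    by (rule eq_matI) (use Nh in auto)
  have b3: "- transpose_mat Nh * (?X \<cdot>\<^sub>m 1\<^sub>m n) + ?X \<cdot>\<^sub>m 1\<^sub>m k * transpose_mat Nh = 0\<^sub>m k n"
    by (rule eq_matI) (use Nh in auto)
  have b4: "- transpose_mat Nh * 0\<^sub>m n k + ?X \<cdot>\<^sub>m 1\<^sub>m k * 1\<^sub>m k = ?X \<cdot>\<^sub>m 1\<^sub>m k"
    by (rule eq_matI) (use Nh in auto)
  have prod: "char_poly_matrix S * R = four_block_mat ([:0,0,1:] \<cdot>\<^sub>m 1\<^sub>m n - Nh * transpose_mat Nh) (-Nh) (0\<^sub>m k n) (?X \<cdot>\<^sub>m 1\<^sub>m k)"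
    unfolding cpm R_def
    by (subst mult_four_block_mat[of _ n n _ k _ k _ _ n _ k]) (use Nh NhT b1 b2 b3 b4 in auto)
  have "det (char_poly_matrix S * R) = char_poly S * det R"
    using det_mult[OF char_poly_matrix_closed[OF S] R] by (simp add: char_poly_def)
  moreover have "det R = ?X ^ n"
    unfolding R_def by (subst det_four_block_mat_upper_right_zero[of _ n _ k]) (use NhT in auto)
  moreover have "det (char_poly_matrix S * R) = det ([:0,0,1:] \<cdot>\<^sub>m 1\<^sub>m n - Nh * transpose_mat Nh) * ?X ^ k"
    unfolding prod by (subst det_four_block_mat_lower_left_zero[of _ n _ k]) (use Nh in auto)
  moreover have "Nh * transpose_mat Nh = map_mat (\<lambda>a. [:a:]) (N * transpose_mat N)"
    unfolding Nh_def using N by (simp add: map_poly_mult(1) map_mat_transpose)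
  ultimately show ?thesis unfolding S_def by simp
qed



lemma deg_prod_lin: "Polynomial.degree (prod_mset (image_mset (\<lambda>a::real. [:-a,1:]) M)) = size M"
proof (induction M)
  case empty then show ?case by simp
next
  case (add x M)
  have "prod_mset (image_mset (\<lambda>a::real. [:-a,1:]) M) \<noteq> 0" by (auto simp: prod_mset_zero_iff)
  then have "Polynomial.degree ([:-x,1:] * prod_mset (image_mset (\<lambda>a::real. [:-a,1:]) M)) = 1 + size M"
    using add by (subst degree_mult_eq) auto
  then show ?case by simp
qed


lemma pc_hom: assumes "q \<noteq> 0" shows "comm_ring_hom (\<lambda>f::real poly. pcompose f q)"
  by unfold_locales (simp_all add: pcompose_add pcompose_mult pcompose_1)

lemma det_scaled:
  fixes L :: "real mat" and \<mu> :: "real multiset"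
  assumes L: "L \<in> carrier_mat n n" and sp: "char_poly L = prod_mset (image_mset (\<lambda>a. [:-a,1:]) \<mu>)"
    and p: "0 < p"
  shows "det ([:0,0,1:] \<cdot>\<^sub>m 1\<^sub>m n - map_mat (\<lambda>a. [:a:]) (real p \<cdot>\<^sub>m L))
       = prod_mset (image_mset (\<lambda>a. [:-(real p*a), 0, 1:]) \<mu>)"
proof -
  define q where "q = [:0, 0, 1 / real p:]"
  have q0: "q \<noteq> 0" using p q_def by simp
  define h where "h f = pcompose f q" for f
  interpret h: comm_ring_hom h unfolding h_def by (rule pc_hom[OF q0])
  have size: "size \<mu> = n"
    using degree_monic_char_poly[OF L] sp deg_prod_lin by metis
  have ent: "[:real p:] * h ((if i = j then [:0,1:] else 0) + [:- l:]) =
        (if i = j then [:0,0,1:] else 0) - [:real p * l:]" for i j :: nat and l :: real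
    using p by (auto simp: h_def q_def pcompose_pCons)
  have ent1: "pCons (- (real p * l)) (pCons 0 1) = Polynomial.smult (real p) (h (pCons (- l) 1))" for l :: real
    using p by (auto simp: h_def q_def pcompose_pCons)
  have ent2: "[:- (real p * l):] = Polynomial.smult (real p) (h [:- l:])" for l :: real
    using p by (auto simp: h_def q_def pcompose_pCons)
  have M: "[:0,0,1:] \<cdot>\<^sub>m 1\<^sub>m n - map_mat (\<lambda>a. [:a:]) (real p \<cdot>\<^sub>m L) =
      [:real p:] \<cdot>\<^sub>m map_mat h (char_poly_matrix L)"
    by (rule eq_matI) (use L ent1 ent2 in \<open>auto simp: char_poly_matrix_def\<close>)
  have "det ([:real p:] \<cdot>\<^sub>m map_mat h (char_poly_matrix L)) = [:real p:] ^ n * h (char_poly L)"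
  proof -
    have "dim_col (char_poly_matrix L) = n" using char_poly_matrix_closed[OF L] by auto
    then show ?thesis by (simp add: char_poly_def)
  qed
  also have "h (char_poly L) = prod_mset (image_mset (\<lambda>a. h [:-a,1:]) \<mu>)"
    unfolding sp by (simp add: h.hom_prod_mset image_mset.compositionality comp_def)
  also have "[:real p:] ^ n * prod_mset (image_mset (\<lambda>a. h [:-a,1:]) \<mu>) =
      prod_mset (image_mset (\<lambda>a. [:real p:] * h [:-a,1:]) \<mu>)"
    unfolding size[symmetric] by (induction \<mu>) (auto simp: algebra_simps)
  also have "(\<lambda>a. [:real p:] * h [:-a,1:]) = (\<lambda>a. [:-(real p*a), 0, 1:])"
    using p by (auto simp: h_def q_def pcompose_pCons)
  finally show ?thesis using M by simp
qed



lemma lin_sq: "[:-s,1:] * [:s,1:] = [:-(s*s), 0, 1::real:]"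
  by (simp add: algebra_simps)

lemma pm_sqrt_prod: assumes "\<forall>a\<in>#\<mu>. a \<ge> 0"
  shows "prod_mset (image_mset (\<lambda>a. [:-a,1:]) (pm_sqrt p \<mu>)) = prod_mset (image_mset (\<lambda>a. [:-(real p*a),0,1:]) \<mu>)"
  using assms
proof (induction \<mu>)
  case empty then show ?case by (simp add: pm_sqrt_def)
next
  case (add x M)
  have ps: "pm_sqrt p (add_mset x M) = {# sqrt (real p * x), - sqrt (real p * x) #} + pm_sqrt p M"
    by (simp add: pm_sqrt_def)
  have x: "x \<ge> 0" using add by simp
  have "sqrt (real p * x) * sqrt (real p * x) = real p * x" using x by simp
  then have "[:- sqrt (real p * x), 1:] * [:- (- sqrt (real p * x)), 1:] = [:-(real p*x),0,1:]"
    using lin_sq[of "sqrt (real p * x)"] by simp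
  then have sq: "[:- sqrt (real p * x), 1:] * [:- (- sqrt (real p * x)), 1:] = [:-(real p*x),0,1:]" .
  have IH: "prod_mset (image_mset (\<lambda>a. [:-a,1:]) (pm_sqrt p M)) = prod_mset (image_mset (\<lambda>a. [:-(real p*a),0,1:]) M)"
    using add by simp
  have "image_mset (\<lambda>a. [:-a,1:]) (pm_sqrt p (add_mset x M)) =
     add_mset [:- sqrt (real p * x), 1:] (add_mset [:- (- sqrt (real p * x)), 1:] (image_mset (\<lambda>a. [:-a,1:]) (pm_sqrt p M)))"
    unfolding ps by simp
  then have "prod_mset (image_mset (\<lambda>a. [:-a,1:]) (pm_sqrt p (add_mset x M))) =
     ([:- sqrt (real p * x), 1:] * [:- (- sqrt (real p * x)), 1:]) * prod_mset (image_mset (\<lambda>a. [:-a,1:]) (pm_sqrt p M))"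
    by (simp only: prod_mset.add_mset mult.assoc)
  also have "\<dots> = [:-(real p*x),0,1:] * prod_mset (image_mset (\<lambda>a. [:-(real p*a),0,1:]) M)"
    by (simp only: sq IH)
  also have "\<dots> = prod_mset (image_mset (\<lambda>a. [:-(real p*a),0,1:]) (add_mset x M))"
    by (simp only: image_mset_add_mset prod_mset.add_mset)
  finally show ?case .
qed





lemma NT_col:
  assumes sg: "signed_graph n E \<sigma>" and p: "0 < p" and x: "x \<in> carrier_vec n" and c: "c < p * length E"
  shows "(transpose_mat (Nmat n p E \<theta>) *\<^sub>v x) $ c =
     real_of_int (\<theta> (fst (E!(c div p))) (c div p)) * x $ fst (E!(c div p)) +
     real_of_int (\<theta> (snd (E!(c div p))) (c div p)) * x $ snd (E!(c div p))"
proof -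
  define j where "j = c div p"
  have j: "j < length E" using c p unfolding j_def by (simp add: less_mult_imp_div_less mult.commute)
  define a where "a = fst (E!j)"
  define b where "b = snd (E!j)"
  have ab: "a < n" "b < n" "a \<noteq> b" using sg_edge[OF sg j] a_def b_def by auto
  have "(transpose_mat (Nmat n p E \<theta>) *\<^sub>v x) $ c = (\<Sum>u\<in>{0..<n}. Nmat n p E \<theta> $$ (u, c) * x $ u)"
    using c x by (simp add: Nmat_def scalar_prod_def)
  also have "\<dots> = (\<Sum>u\<in>{0..<n}. if u \<in> {a, b} then real_of_int (\<theta> u j) * x $ u else 0)"
    by (rule sum.cong[OF refl]) (use c in \<open>auto simp: Nmat_entry gfun_def j_def[symmetric] ends_def a_def b_def\<close>)
  also have "\<dots> = (\<Sum>u\<in>{0..<n} \<inter> {a, b}. real_of_int (\<theta> u j) * x $ u)"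
    by (rule sum.inter_restrict[symmetric]) simp
  also have "{0..<n} \<inter> {a, b} = {a, b}" using ab by auto
  also have "(\<Sum>u\<in>{a, b}. real_of_int (\<theta> u j) * x $ u) =
      real_of_int (\<theta> a j) * x $ a + real_of_int (\<theta> b j) * x $ b" using ab by simp
  finally show ?thesis unfolding a_def b_def j_def .
qed

lemma sp_self_nonneg: "(v::real vec) \<bullet> v \<ge> 0"
  unfolding scalar_prod_def by (intro sum_nonneg) simp

lemma sp_self_zero: assumes "v \<in> carrier_vec k" "(v::real vec) \<bullet> v = 0" shows "v = 0\<^sub>v k"
proof -
  have "\<forall>i\<in>{0..<dim_vec v}. v $ i * v $ i = 0"
    using assms(2) unfolding scalar_prod_def by (subst sum_nonneg_eq_0_iff[symmetric]) auto
  then show ?thesis using assms(1) by (intro eq_vecI) auto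
qed


lemma lap_carrier: "laplacian n E \<sigma> \<in> carrier_mat n n"
  unfolding laplacian_def adjacency_def by (rule minus_carrier_mat, rule mat_carrier)

lemma quad_form:
  assumes sg: "signed_graph n E \<sigma>" and or: "orientation E \<sigma> \<theta>" and p: "0 < p"
    and v: "v \<in> carrier_vec n" and ev: "laplacian n E \<sigma> *\<^sub>v v = a \<cdot>\<^sub>v v"
  shows "real p * a * (v \<bullet> v) = (transpose_mat (Nmat n p E \<theta>) *\<^sub>v v) \<bullet> (transpose_mat (Nmat n p E \<theta>) *\<^sub>v v)"
proof -
  let ?N = "Nmat n p E \<theta>"
  let ?L = "laplacian n E \<sigma>"
  have N: "?N \<in> carrier_mat n (p * length E)" by (rule Nmat_carrier)
  have L: "?L \<in> carrier_mat n n" by (rule lap_carrier)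
  have w: "transpose_mat ?N *\<^sub>v v \<in> carrier_vec (p * length E)" using N v by simp
  have "(transpose_mat ?N *\<^sub>v v) \<bullet> (transpose_mat ?N *\<^sub>v v) = v \<bullet> (?N *\<^sub>v (transpose_mat ?N *\<^sub>v v))"
    by (rule transpose_vec_mult_scalar[OF N w v])
  also have "?N *\<^sub>v (transpose_mat ?N *\<^sub>v v) = (?N * transpose_mat ?N) *\<^sub>v v"
    using N v by (simp add: assoc_mult_mat_vec)
  also have "\<dots> = (real p \<cdot>\<^sub>m ?L) *\<^sub>v v" by (subst NNT[OF sg or p]) (rule refl)
  also have "\<dots> = real p \<cdot>\<^sub>v (?L *\<^sub>v v)"
    by (rule eq_vecI) (use L v in \<open>auto simp: scalar_prod_smult_left\<close>)
  also have "\<dots> = (real p * a) \<cdot>\<^sub>v v" using ev by (simp add: smult_smult_assoc)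
  also have "v \<bullet> \<dots> = real p * a * (v \<bullet> v)" using v by (simp add: scalar_prod_smult_distrib)
  finally show ?thesis by simp
qed






lemma smult_mat_vec: assumes "A \<in> carrier_mat n n" "v \<in> carrier_vec n"
  shows "(k \<cdot>\<^sub>m A) *\<^sub>v v = k \<cdot>\<^sub>v (A *\<^sub>v (v::real vec))"
  by (rule eq_vecI) (use assms in \<open>auto simp: scalar_prod_smult_left\<close>)

lemma zero_root_in: assumes "poly (prod_mset (image_mset (\<lambda>a. [:-a,1:]) \<mu>)) (b::real) = 0"
  shows "b \<in># \<mu>"
  using assms by (auto simp: poly_prod_mset prod_mset_zero_iff)

theorem theorem4p2:
  fixes n p :: nat and E :: "(nat \<times> nat) list" and \<sigma> :: "nat \<Rightarrow> int"
    and \<theta> :: "nat \<Rightarrow> nat \<Rightarrow> int" and \<mu> :: "real multiset"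
  assumes "signed_graph n E \<sigma>" and "connected_graph n E"
    and "orientation E \<sigma> \<theta>" and "p \<ge> 1"
    and "has_spectrum (laplacian n E \<sigma>) \<mu>"
  shows "(balanced E \<sigma> \<longrightarrow> 0 \<in># \<mu> \<and>
           has_spectrum (Sp_adjacency n p E \<theta>)
             (replicate_mset (p * length E + 2 - n) 0 + pm_sqrt p (\<mu> - {#0#})))
       \<and> (\<not> balanced E \<sigma> \<longrightarrow>
           has_spectrum (Sp_adjacency n p E \<theta>)
             (replicate_mset (p * length E - n) 0 + pm_sqrt p \<mu>))"
proof -
  note sg = assms(1) and conn = assms(2) and or = assms(3)
  have p0: "0 < p" using assms(4) by simp
  define K where "K = p * length E"
  define N where "N = Nmat n p E \<theta>"
  define L where "L = laplacian n E \<sigma>"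
  define S where "S = Sp_adjacency n p E \<theta>"
  define X where "X = ([:0,1:] :: real poly)"
  define g where "g = (\<lambda>a::real. [:-a,1:])"
  have N: "N \<in> carrier_mat n K" unfolding K_def N_def by (rule Nmat_carrier)
  have L: "L \<in> carrier_mat n n" unfolding L_def by (rule lap_carrier)
  have NT: "transpose_mat N \<in> carrier_mat K n" using N by simp
  have nnt: "N * transpose_mat N = real p \<cdot>\<^sub>m L" unfolding N_def L_def by (rule NNT[OF sg or p0])
  have spL: "char_poly L = prod_mset (image_mset g \<mu>)"
    using assms(5) unfolding has_spectrum_def L_def g_def by simp
  have root: "eigenvalue L a" if "a \<in># \<mu>" for a
  proof -
    have "poly (char_poly L) a = 0" unfolding spL g_def poly_prod_mset using that
      by (auto simp: prod_mset_zero_iff)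
    then show ?thesis using eigenvalue_root_char_poly[OF L] by simp
  qed
  have qf: "real p * a * (v \<bullet> v) = (transpose_mat N *\<^sub>v v) \<bullet> (transpose_mat N *\<^sub>v v)"
    if "v \<in> carrier_vec n" "L *\<^sub>v v = a \<cdot>\<^sub>v v" for v a
    using quad_form[OF sg or p0, of v a] that unfolding N_def L_def by simp
  have nonneg: "\<forall>a\<in>#\<mu>. a \<ge> 0"
  proof
    fix a assume a: "a \<in># \<mu>"
    obtain v where ev: "eigenvector L v a" using root[OF a] eigenvalue_def by blast
    then have v: "v \<in> carrier_vec n" "v \<noteq> 0\<^sub>v n" "L *\<^sub>v v = a \<cdot>\<^sub>v v" using L unfolding eigenvector_def by auto
    have "real p * a * (v \<bullet> v) \<ge> 0" using qf[OF v(1) v(3)] sp_self_nonneg by simp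
    moreover have "v \<bullet> v > 0" using sp_self_nonneg[of v] sp_self_zero[OF v(1)] v(2) by force
    ultimately have "real p * a \<ge> 0" by (simp add: zero_le_mult_iff)
    then show "a \<ge> 0" using p0 by (simp add: zero_le_mult_iff)
  qed
  define B where "B = prod_mset (image_mset (\<lambda>a. [:-(real p*a),0,1:]) \<mu>)"
  have key: "char_poly S * X ^ n = B * X ^ K"
  proof -
    have "S = four_block_mat (0\<^sub>m n n) N (transpose_mat N) (0\<^sub>m K K)"
      unfolding S_def N_def K_def by (rule Sp_block)
    then have "char_poly S * X ^ n = det ([:0,0,1:] \<cdot>\<^sub>m 1\<^sub>m n - map_mat (\<lambda>a. [:a:]) (N * transpose_mat N)) * X ^ K"
      using charpoly_block[OF N] unfolding X_def by simp
    also have "det ([:0,0,1:] \<cdot>\<^sub>m 1\<^sub>m n - map_mat (\<lambda>a. [:a:]) (N * transpose_mat N)) = B"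
      unfolding nnt B_def by (rule det_scaled[OF L spL[unfolded g_def] p0])
    finally show ?thesis .
  qed
  have Bpm: "B = prod_mset (image_mset g (pm_sqrt p \<mu>))"
    unfolding B_def g_def by (rule pm_sqrt_prod[OF nonneg, symmetric])
  have rep: "prod_mset (image_mset g (replicate_mset r 0 + M)) = X ^ r * prod_mset (image_mset g M)" for r M
    by (simp add: g_def X_def image_replicate_mset prod_mset_replicate_mset)
  have Xn0: "X ^ k \<noteq> 0" for k unfolding X_def by simp
  have ab_edge: "\<theta> (fst (E!j)) j * \<theta> (snd (E!j)) j = - \<sigma> j"
       "\<theta> (fst (E!j)) j = 1 \<or> \<theta> (fst (E!j)) j = -1"
       "\<theta> (snd (E!j)) j = 1 \<or> \<theta> (snd (E!j)) j = -1" if "j < length E" for j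
    using or that unfolding orientation_def by auto
  have hs: "has_spectrum S M \<longleftrightarrow> char_poly S = prod_mset (image_mset g M)" for M
    unfolding has_spectrum_def g_def by simp
  show ?thesis
  proof (intro conjI impI)
    assume bal: "balanced E \<sigma>"
    obtain s where s: "\<forall>v<n. s v = 1 \<or> s v = (-1::int)" "\<forall>j<length E. \<sigma> j = s (fst (E!j)) * s (snd (E!j))"
      using switching[OF sg conn bal] by blast
    define x where "x = vec n (\<lambda>u. real_of_int (s u))"
    have x: "x \<in> carrier_vec n" unfolding x_def by simp
    have NTx: "transpose_mat N *\<^sub>v x = 0\<^sub>v K"
    proof (rule eq_vecI)
      show "dim_vec (transpose_mat N *\<^sub>v x) = dim_vec (0\<^sub>v K)" using NT by simp
      fix c assume "c < dim_vec (0\<^sub>v K)"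
      then have c: "c < p * length E" unfolding K_def by simp
      define j where "j = c div p"
      have j: "j < length E" using c p0 unfolding j_def by (simp add: less_mult_imp_div_less mult.commute)
      have ab: "fst (E!j) < n" "snd (E!j) < n" using sg_edge[OF sg j] by auto
      have "\<theta> (fst (E!j)) j * s (fst (E!j)) + \<theta> (snd (E!j)) j * s (snd (E!j)) = 0"
        using ab_edge[OF j] s(1) ab s(2) j by (elim disjE) (auto simp: algebra_simps)
      then have "real_of_int (\<theta> (fst (E!j)) j) * x $ fst (E!j) + real_of_int (\<theta> (snd (E!j)) j) * x $ snd (E!j) = 0"
        using ab unfolding x_def by (simp flip: of_int_mult of_int_add)
      then show "(transpose_mat N *\<^sub>v x) $ c = 0\<^sub>v K $ c"
        using NT_col[OF sg p0 x c, of \<theta>] c unfolding N_def j_def K_def by simp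
    qed
    have "real p \<cdot>\<^sub>v (L *\<^sub>v x) = 0\<^sub>v n"
    proof -
      have "real p \<cdot>\<^sub>v (L *\<^sub>v x) = (N * transpose_mat N) *\<^sub>v x" unfolding nnt using smult_mat_vec[OF L x] by simp
      also have "\<dots> = N *\<^sub>v (transpose_mat N *\<^sub>v x)" using N NT x by simp
      also have "\<dots> = 0\<^sub>v n" unfolding NTx using N by (intro eq_vecI) (auto simp: scalar_prod_def)
      finally show ?thesis .
    qed
    then have Lx: "L *\<^sub>v x = 0 \<cdot>\<^sub>v x"
      using p0 L x by (intro eq_vecI) (auto simp: vec_eq_iff)
    have "x \<noteq> 0\<^sub>v n"
    proof
      assume "x = 0\<^sub>v n"
      moreover have "0 < n" using conn connected_graph_def by auto
      ultimately have "x $ 0 = 0" by simp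
      then show False using s(1) \<open>0 < n\<close> unfolding x_def by auto
    qed
    then have "eigenvalue L 0" using x Lx L unfolding eigenvalue_def eigenvector_def by auto
    then have "poly (char_poly L) 0 = 0" using eigenvalue_root_char_poly[OF L] by simp
    then show z: "0 \<in># \<mu>" using zero_root_in spL unfolding g_def by metis
    define \<mu>' where "\<mu>' = \<mu> - {#0#}"
    have mu: "\<mu> = add_mset 0 \<mu>'" unfolding \<mu>'_def using z by simp
    have "pm_sqrt p \<mu> = {#0, 0#} + pm_sqrt p \<mu>'" by (subst mu) (simp add: pm_sqrt_def)
    then have B2: "B = X ^ 2 * prod_mset (image_mset g (pm_sqrt p \<mu>'))"
      unfolding Bpm by (simp add: g_def X_def power2_eq_square)
    have "n \<le> Suc (length E)" by (rule edge_count[OF sg conn])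
    moreover have "length E \<le> K" using p0 unfolding K_def by simp
    ultimately have nK: "n \<le> K + 2" by simp
    have "char_poly S * X ^ n = (X ^ (K + 2 - n) * prod_mset (image_mset g (pm_sqrt p \<mu>'))) * X ^ n"
    proof -
      have "char_poly S * X ^ n = B * X ^ K" by (rule key)
      also have "\<dots> = prod_mset (image_mset g (pm_sqrt p \<mu>')) * X ^ (K + 2)"
        unfolding B2 by (simp only: power_add mult_ac)
      also have "X ^ (K + 2) = X ^ (K + 2 - n) * X ^ n" using nK by (simp flip: power_add)
      finally show ?thesis by (simp add: algebra_simps)
    qed
    then have "char_poly S = X ^ (K + 2 - n) * prod_mset (image_mset g (pm_sqrt p \<mu>'))"
      by (rule mult_right_cancel[OF Xn0, THEN iffD1])
    then show "has_spectrum (Sp_adjacency n p E \<theta>)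
             (replicate_mset (p * length E + 2 - n) 0 + pm_sqrt p (\<mu> - {#0#}))"
      unfolding S_def[symmetric] hs rep K_def[symmetric] \<mu>'_def[symmetric] .
  next
    assume nb: "\<not> balanced E \<sigma>"
    have z: "0 \<notin># \<mu>"
    proof
      assume "0 \<in># \<mu>"
      obtain v where ev: "eigenvector L v 0" using root[OF \<open>0 \<in># \<mu>\<close>] eigenvalue_def by blast
      then have v: "v \<in> carrier_vec n" "v \<noteq> 0\<^sub>v n" "L *\<^sub>v v = 0 \<cdot>\<^sub>v v" using L unfolding eigenvector_def by auto
      have w: "transpose_mat N *\<^sub>v v \<in> carrier_vec K" using NT v by simp
      have "(transpose_mat N *\<^sub>v v) \<bullet> (transpose_mat N *\<^sub>v v) = 0" using qf[OF v(1) v(3)] by simp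
      then have w0: "transpose_mat N *\<^sub>v v = 0\<^sub>v K" by (rule sp_self_zero[OF w])
      have rel: "\<forall>j<length E. v $ snd (E!j) = real_of_int (\<sigma> j) * v $ fst (E!j)"
      proof (intro allI impI)
        fix j assume j: "j < length E"
        have c: "j * p < p * length E" using j p0 by (simp add: mult.commute)
        have cj: "j * p div p = j" using p0 by simp
        have "(transpose_mat N *\<^sub>v v) $ (j * p) = 0" using w0 c unfolding K_def by simp
        then have e: "real_of_int (\<theta> (fst (E!j)) j) * v $ fst (E!j) + real_of_int (\<theta> (snd (E!j)) j) * v $ snd (E!j) = 0"
          using NT_col[OF sg p0 v(1) c, of \<theta>] unfolding N_def cj by simp
        have e2: "real_of_int (\<theta> (fst (E!j)) j) * real_of_int (\<theta> (snd (E!j)) j) = - real_of_int (\<sigma> j)"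
          using ab_edge(1)[OF j] by (simp flip: of_int_mult of_int_minus)
        show "v $ snd (E!j) = real_of_int (\<sigma> j) * v $ fst (E!j)"
          using ab_edge(3)[OF j] e e2 by (elim disjE) (auto simp: algebra_simps)
      qed
      obtain u0 where u0: "u0 < n" "v $ u0 \<noteq> 0" using v(1,2) by (metis eq_vecI carrier_vecD index_zero_vec(1,2))
      have "balanced E \<sigma>" by (rule kernel_balanced[OF sg conn rel u0])
      then show False using nb by simp
    qed
    have PB: "poly B 0 \<noteq> 0"
      unfolding B_def poly_prod_mset using z p0 by (auto simp: prod_mset_zero_iff)
    have Kn: "n \<le> K"
    proof (rule ccontr)
      assume "\<not> n \<le> K"
      then have "n = (n - K) + K" and nk: "n - K > 0" by auto
      then have "X ^ n = X ^ (n - K) * X ^ K" by (metis power_add)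
      with key have "char_poly S * X ^ (n - K) * X ^ K = B * X ^ K" by (metis mult.assoc)
      then have eq: "char_poly S * X ^ (n - K) = B" by (rule mult_right_cancel[OF Xn0, THEN iffD1])
      have "poly B 0 = poly (char_poly S * X ^ (n - K)) 0" by (simp only: eq)
      also have "\<dots> = 0" using nk by (simp add: X_def)
      finally show False using PB by simp
    qed
    have "char_poly S * X ^ n = (X ^ (K - n) * B) * X ^ n"
      using key Kn by (simp add: algebra_simps flip: power_add)
    then have "char_poly S = X ^ (K - n) * B" by (rule mult_right_cancel[OF Xn0, THEN iffD1])
    then show "has_spectrum (Sp_adjacency n p E \<theta>) (replicate_mset (p * length E - n) 0 + pm_sqrt p \<mu>)"
      unfolding S_def[symmetric] hs rep K_def[symmetric] Bpm .
  qed
qed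


end
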